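(* Let $f:\mathbb{R}^D\to\mathbb{R}$ be differentiable, bounded below by $f_{\mathrm{inf}}>-\infty$, and $L$-smooth. Fix $\beta_1,\beta_2\in[0,1)$, $\epsilon>0$, a deterministic $\theta_0\in\mathbb{R}^D$, and constants $0<a_1\le a_2$. For $T\ge1$, run the ADOPT algorithm with constant learning rate $\alpha_t=\alpha$ where $a_1/\sqrt{T}\le\alpha\le a_2/\sqrt{T}$ (i.e. $\alpha=\Theta(1/\sqrt T)$): $v_0=g_0\odot g_0$, $m_1=g_1/\max\{\sqrt{v_0},\epsilon\}$, and for $t=1,\dots,T$: $$\theta_t=\theta_{t-1}-\alpha_t m_t,\quad v_t=\beta_2 v_{t-1}+(1-\beta_2)g_t\odot g_t,\quad m_{t+1}=\beta_1 m_t+(1-\beta_1)\frac{g_{t+1}}{\max\{\sqrt{v_t},\epsilon\}}.$$ Here $g_0$ is a random vector with $\mathbb{E}\|g_0\|^2\le G^2$, and for $t\ge1$, $g_t$ is a random stochastic gradient with $\mathbb{E}[g_t\mid g_0,\dots,g_{t-1}]=\nabla f(\theta_{t-1})$ and $\mathbb{E}\|g_t\|^2\le G^2$, for a constant $G>0$. Then $$\min_{t=1,\dots,T}\Big\{\mathbb{E}\big[\|\nabla f(\theta_{t-1})\|^{4/3}\big]^{3/2}\Big\}=\mathcal{O}(1/\sqrt{T}),$$ i.e. there is a constant $K$ independent of $T$ (possibly depending on $f(\theta_0)-f_{\mathrm{inf}},L,G,\epsilon,D,\beta_1,\beta_2,a_1,a_2$) such that the left-hand side is at most $K/\sqrt{T}$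 for every $T\ge1$.
   Context: $L$-smooth means $\|\nabla f(x)-\nabla f(y)\|\le L\|x-y\|$ for all $x,y$, with $L>0$. Norms are Euclidean; $\odot$, square root, division and $\max\{\cdot,\epsilon\}$ act elementwise. *)

theory Defs
  imports "HOL-Analysis.Analysis" "HOL-Probability.Probability"
begin

text \<open>ADOPT iterates, computed pointwise from a sequence of gradient vectors g.
  adopt_state alpha b1 b2 eps theta0 g t = (theta_t, v_t, m_(t+1)).\<close>

fun adopt_state :: "real \<Rightarrow> real \<Rightarrow> real \<Rightarrow> real \<Rightarrow> real^'D \<Rightarrow> (nat \<Rightarrow> real^'D) \<Rightarrow> nat
     \<Rightarrow> (real^'D) \<times> (real^'D) \<times> (real^'D)" where
  "adopt_state \<alpha> \<beta>1 \<beta>2 \<epsilon> \<theta>0 g 0 =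
     (let v0 = (\<chi> i. g 0 $ i * g 0 $ i)
      in (\<theta>0, v0, (\<chi> i. g 1 $ i / max (sqrt (v0 $ i)) \<epsilon>)))"
| "adopt_state \<alpha> \<beta>1 \<beta>2 \<epsilon> \<theta>0 g (Suc t) =
     (let (\<theta>, v, m) = adopt_state \<alpha> \<beta>1 \<beta>2 \<epsilon> \<theta>0 g t;
          \<theta>' = \<theta> - \<alpha> *\<^sub>R m;
          v' = (\<chi> i. \<beta>2 * v $ i + (1 - \<beta>2) * (g (Suc t) $ i * g (Suc t) $ i));
          m' = (\<chi> i. \<beta>1 * m $ i + (1 - \<beta>1) * (g (Suc (Suc t)) $ i / max (sqrt (v' $ i)) \<epsilon>))
      in (\<theta>', v', m'))"

definition adopt_theta :: "real \<Rightarrow> real \<Rightarrow> real \<Rightarrow> real \<Rightarrow> real^'D \<Rightarrow> (nat \<Rightarrow> real^'D) \<Rightarrow> nat \<Rightarrow> real^'D" where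
  "adopt_theta \<alpha> \<beta>1 \<beta>2 \<epsilon> \<theta>0 g t = fst (adopt_state \<alpha> \<beta>1 \<beta>2 \<epsilon> \<theta>0 g t)"

definition gen_sigma :: "'m measure \<Rightarrow> (nat \<Rightarrow> 'm \<Rightarrow> real^'D) \<Rightarrow> nat \<Rightarrow> 'm measure" where
  "gen_sigma M g t = sigma (space M) (\<Union>i<t. {g i -` A \<inter> space M | A. A \<in> sets borel})"

end

theory Submission
  imports Defs
begin


context
  fixes \<alpha> \<beta>1 \<beta>2 \<epsilon> :: real and \<theta>0 :: "real^'D"
begin

definition "TH G s = fst (adopt_state \<alpha> \<beta>1 \<beta>2 \<epsilon> \<theta>0 G s)"
definition "VV G s = fst (snd (adopt_state \<alpha> \<beta>1 \<beta>2 \<epsilon> \<theta>0 G s))"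
definition "MV G s = snd (snd (adopt_state \<alpha> \<beta>1 \<beta>2 \<epsilon> \<theta>0 G s))"
definition "XV G t = (\<chi> i. G t $ i / max (sqrt (VV G (t - 1) $ i)) \<epsilon>)"

lemma TH_0: "TH G 0 = \<theta>0" by (simp add: TH_def Let_def)
lemma VV_0: "VV G 0 = (\<chi> i. G 0 $ i * G 0 $ i)" by (simp add: VV_def Let_def)
lemma MV_0: "MV G 0 = XV G 1" by (simp add: MV_def XV_def VV_def Let_def)
lemma TH_Suc: "TH G (Suc s) = TH G s - \<alpha> *\<^sub>R MV G s"
  by (simp add: TH_def MV_def Let_def split_def)
lemma VV_Suc: "VV G (Suc s) = (\<chi> i. \<beta>2 * VV G s $ i + (1 - \<beta>2) * (G (Suc s) $ i * G (Suc s) $ i))"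
  by (simp add: VV_def Let_def split_def)
lemma MV_Suc: "MV G (Suc s) = \<beta>1 *\<^sub>R MV G s + (1 - \<beta>1) *\<^sub>R XV G (Suc (Suc s))"
  by (simp add: MV_def XV_def VV_def Let_def split_def vec_eq_iff)

lemma norm_sq_vec: "(norm (x::real^'n))\<^sup>2 = (\<Sum>i\<in>UNIV. (x $ i)\<^sup>2)"
  unfolding power2_norm_eq_inner inner_vec_def by (simp add: power2_eq_square)

lemma TH_adopt: "adopt_theta \<alpha> \<beta>1 \<beta>2 \<epsilon> \<theta>0 G s = TH G s"
  by (simp add: adopt_theta_def TH_def)

lemma state_cong: "(\<forall>j\<le>Suc s. G j = G' j) \<Longrightarrow> adopt_state \<alpha> \<beta>1 \<beta>2 \<epsilon> \<theta>0 G s = adopt_state \<alpha> \<beta>1 \<beta>2 \<epsilon> \<theta>0 G' s"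
proof (induction s)
  case 0 then show ?case by (simp add: Let_def)
next
  case (Suc s)
  then have "adopt_state \<alpha> \<beta>1 \<beta>2 \<epsilon> \<theta>0 G s = adopt_state \<alpha> \<beta>1 \<beta>2 \<epsilon> \<theta>0 G' s" by simp
  moreover have "G (Suc s) = G' (Suc s)" "G (Suc (Suc s)) = G' (Suc (Suc s))" using Suc.prems by auto
  ultimately show ?case by (simp add: Let_def split_def)
qed

lemma TH_VV_cong: assumes that: "\<forall>j\<le>s. G j = G' j" shows "TH G s = TH G' s \<and> VV G s = VV G' s"
proof (cases s)
  case 0 then show ?thesis using that by (simp add: TH_0 VV_0)
next
  case (Suc r)
  then have "adopt_state \<alpha> \<beta>1 \<beta>2 \<epsilon> \<theta>0 G r = adopt_state \<alpha> \<beta>1 \<beta>2 \<epsilon> \<theta>0 G' r"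
    using that by (intro state_cong) auto
  moreover have "G (Suc r) = G' (Suc r)" using Suc that by auto
  ultimately show ?thesis using Suc by (simp add: TH_def VV_def Let_def split_def)
qed

lemma XV_norm: assumes "\<epsilon> > 0" shows "(norm (XV G t))\<^sup>2 \<le> (norm (G t))\<^sup>2 / \<epsilon>\<^sup>2"
proof -
  have "(norm (XV G t))\<^sup>2 = (\<Sum>i\<in>UNIV. (G t $ i / max (sqrt (VV G (t - 1) $ i)) \<epsilon>)\<^sup>2)"
    by (simp add: norm_sq_vec XV_def)
  also have "\<dots> \<le> (\<Sum>i\<in>UNIV. (G t $ i)\<^sup>2 / \<epsilon>\<^sup>2)"
  proof (rule sum_mono)
    fix i
    have "\<epsilon>\<^sup>2 \<le> (max (sqrt (VV G (t - 1) $ i)) \<epsilon>)\<^sup>2" using assms by (intro power_mono) auto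
    then show "(G t $ i / max (sqrt (VV G (t - 1) $ i)) \<epsilon>)\<^sup>2 \<le> (G t $ i)\<^sup>2 / \<epsilon>\<^sup>2"
      using assms by (simp add: power_divide frac_le)
  qed
  also have "\<dots> = (norm (G t))\<^sup>2 / \<epsilon>\<^sup>2"
    by (simp add: norm_sq_vec sum_divide_distrib)
  finally show ?thesis .
qed

end

lemma descent:
  fixes f :: "'a::real_inner \<Rightarrow> real"
  assumes grad: "\<And>x. GDERIV f x :> df x"
    and smooth: "\<And>x y. norm (df x - df y) \<le> L * norm (x - y)" and L0: "L \<ge> 0"
  shows "f y \<le> f x + df x \<bullet> (y - x) + L * (norm (y - x))\<^sup>2"
proof -
  define d where "d = y - x"
  have D: "((\<lambda>t. f (x + t *\<^sub>R d)) has_real_derivative (df (x + t *\<^sub>R d) \<bullet> d)) (at t)" for t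
  proof -
    have 1: "((\<lambda>t. x + t *\<^sub>R d) has_derivative (\<lambda>h. h *\<^sub>R d)) (at t)"
      by (auto intro!: derivative_eq_intros)
    have 2: "(f has_derivative (\<lambda>h. h \<bullet> df (x + t *\<^sub>R d))) (at (x + t *\<^sub>R d))"
      using grad unfolding gderiv_def by blast
    have "((\<lambda>t. f (x + t *\<^sub>R d)) has_derivative (\<lambda>h. (h *\<^sub>R d) \<bullet> df (x + t *\<^sub>R d))) (at t)"
      using has_derivative_compose[OF 1 2] by simp
    moreover have "(\<lambda>h. (h *\<^sub>R d) \<bullet> df (x + t *\<^sub>R d)) = (*) (df (x + t *\<^sub>R d) \<bullet> d)"
      by (auto simp: inner_commute)
    ultimately show ?thesis unfolding has_field_derivative_def by simp
  qed
  obtain z where z: "0 < z" "z < 1"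
    "f (x + 1 *\<^sub>R d) - f (x + 0 *\<^sub>R d) = (1 - 0) * (df (x + z *\<^sub>R d) \<bullet> d)"
    using MVT2[of 0 1 "\<lambda>t. f (x + t *\<^sub>R d)" "\<lambda>t. df (x + t *\<^sub>R d) \<bullet> d"] D by auto
  have "df (x + z *\<^sub>R d) \<bullet> d = df x \<bullet> d + (df (x + z *\<^sub>R d) - df x) \<bullet> d"
    by (simp add: inner_diff_left)
  also have "(df (x + z *\<^sub>R d) - df x) \<bullet> d \<le> norm (df (x + z *\<^sub>R d) - df x) * norm d"
    by (rule norm_cauchy_schwarz)
  also have "norm (df (x + z *\<^sub>R d) - df x) \<le> L * (z * norm d)"
    using smooth[of "x + z *\<^sub>R d" x] z by simp
  also have "L * (z * norm d) * norm d \<le> L * (norm d)\<^sup>2"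
  proof -
    have "z * (norm d * norm d) \<le> norm d * norm d" using z by (simp add: mult_left_le_one_le)
    then show ?thesis using L0 by (simp add: power2_eq_square mult.assoc mult_left_mono)
  qed
  finally show ?thesis using z unfolding d_def by simp (smt (verit) mult_right_mono norm_ge_zero)
qed


context
  fixes \<alpha> \<beta>1 \<beta>2 \<epsilon> :: real and \<theta>0 :: "real^'D"
    and f :: "real^'D \<Rightarrow> real" and df :: "real^'D \<Rightarrow> real^'D" and L :: real
  assumes grad: "\<And>x. GDERIV f x :> df x"
    and smooth: "\<And>x y. norm (df x - df y) \<le> L * norm (x - y)" and L0: "L \<ge> 0"
    and b1: "0 \<le> \<beta>1" "\<beta>1 < 1" and al: "\<alpha> \<ge> 0"
begin

abbreviation "th \<equiv> TH \<alpha> \<beta>1 \<beta>2 \<epsilon> \<theta>0"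
abbreviation "mv \<equiv> MV \<alpha> \<beta>1 \<beta>2 \<epsilon> \<theta>0"
abbreviation "xv \<equiv> XV \<alpha> \<beta>1 \<beta>2 \<epsilon> \<theta>0"
definition "cc = \<beta>1 / (1 - \<beta>1)"
definition "ZZ G s = th G s - (cc * \<alpha>) *\<^sub>R mv G (s - 1)"

lemma cc_nonneg: "cc \<ge> 0" using b1 by (simp add: cc_def)

lemma ZZ_Suc: "ZZ G (Suc s) = ZZ G s - \<alpha> *\<^sub>R xv G (Suc s)"
proof (cases s)
  case 0 then show ?thesis by (simp add: ZZ_def TH_Suc MV_0)
next
  case (Suc r)
  have h1: "(\<alpha> + cc * \<alpha>) * \<beta>1 = cc * \<alpha>" and h2: "(\<alpha> + cc * \<alpha>) * (1 - \<beta>1) = \<alpha>"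
    using b1 by (simp_all add: cc_def field_simps)
  have key: "(\<alpha> + cc * \<alpha>) *\<^sub>R mv G (Suc r) = (cc * \<alpha>) *\<^sub>R mv G r + \<alpha> *\<^sub>R xv G (Suc (Suc r))"
    unfolding MV_Suc scaleR_add_right scaleR_scaleR h1 h2 ..
  have "ZZ G (Suc s) = th G (Suc r) - ((\<alpha> + cc * \<alpha>) *\<^sub>R mv G (Suc r))"
    using Suc by (simp add: ZZ_def TH_Suc scaleR_add_left)
  also have "\<dots> = ZZ G s - \<alpha> *\<^sub>R xv G (Suc s)"
    unfolding key using Suc by (simp add: ZZ_def)
  finally show ?thesis .
qed

lemma step_ineq:
  "\<alpha> * (df (th G s) \<bullet> xv G (Suc s)) \<le> f (ZZ G s) - f (ZZ G (Suc s))
     + L * (1 + cc) * \<alpha>\<^sup>2 * ((norm (xv G (Suc s)))\<^sup>2 + (norm (mv G (s - 1)))\<^sup>2)"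
proof -
  define x where "x = xv G (Suc s)"
  define m where "m = mv G (s - 1)"
  have d1: "f (ZZ G (Suc s)) \<le> f (ZZ G s) + df (ZZ G s) \<bullet> (- \<alpha> *\<^sub>R x) + L * (norm (- \<alpha> *\<^sub>R x))\<^sup>2"
    using descent[OF grad smooth L0, of "ZZ G (Suc s)" "ZZ G s"] by (simp add: ZZ_Suc x_def)
  have n1: "(norm (- \<alpha> *\<^sub>R x))\<^sup>2 = \<alpha>\<^sup>2 * (norm x)\<^sup>2" by (simp add: power_mult_distrib)
  have "(df (th G s) - df (ZZ G s)) \<bullet> x \<le> norm (df (th G s) - df (ZZ G s)) * norm x"
    by (rule norm_cauchy_schwarz)
  also have "norm (df (th G s) - df (ZZ G s)) \<le> L * (cc * \<alpha> * norm m)"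
    using smooth[of "th G s" "ZZ G s"] cc_nonneg al by (simp add: ZZ_def m_def)
  finally have "(df (th G s) - df (ZZ G s)) \<bullet> x \<le> L * (cc * \<alpha> * norm m) * norm x"
    by (simp add: mult_right_mono)
  also have "\<dots> = L * cc * \<alpha> * (norm m * norm x)" by simp
  also have "\<dots> \<le> L * cc * \<alpha> * ((norm x)\<^sup>2 + (norm m)\<^sup>2)"
  proof -
    have "norm m * norm x \<le> (norm x)\<^sup>2 + (norm m)\<^sup>2"
      by (smt (verit) norm_ge_zero power2_eq_square mult_left_mono mult_right_mono sum_squares_bound)
    then show ?thesis using L0 cc_nonneg al by (intro mult_left_mono) auto
  qed
  finally have c1: "(df (th G s) - df (ZZ G s)) \<bullet> x \<le> L * cc * \<alpha> * ((norm x)\<^sup>2 + (norm m)\<^sup>2)" .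
  have "\<alpha> * (df (th G s) \<bullet> x) = \<alpha> * (df (ZZ G s) \<bullet> x) + \<alpha> * ((df (th G s) - df (ZZ G s)) \<bullet> x)"
    by (simp add: inner_diff_left algebra_simps)
  also have "\<alpha> * ((df (th G s) - df (ZZ G s)) \<bullet> x) \<le> \<alpha> * (L * cc * \<alpha> * ((norm x)\<^sup>2 + (norm m)\<^sup>2))"
    using c1 al by (rule mult_left_mono)
  finally have "\<alpha> * (df (th G s) \<bullet> x) \<le> f (ZZ G s) - f (ZZ G (Suc s)) + L * \<alpha>\<^sup>2 * (norm x)\<^sup>2
      + L * cc * \<alpha>\<^sup>2 * ((norm x)\<^sup>2 + (norm m)\<^sup>2)"
    using d1 n1 by (simp add: power2_eq_square algebra_simps)
  also have "\<dots> \<le> f (ZZ G s) - f (ZZ G (Suc s)) + L * (1 + cc) * \<alpha>\<^sup>2 * ((norm x)\<^sup>2 + (norm m)\<^sup>2)"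
  proof -
    have "L * \<alpha>\<^sup>2 * (norm x)\<^sup>2 \<le> L * \<alpha>\<^sup>2 * ((norm x)\<^sup>2 + (norm m)\<^sup>2)"
      using L0 by (intro mult_left_mono) auto
    then show ?thesis by (simp add: algebra_simps)
  qed
  finally show ?thesis unfolding x_def m_def .
qed

lemma telescope:
  "\<alpha> * (\<Sum>s<T. df (th G s) \<bullet> xv G (Suc s)) \<le> f (ZZ G 0) - f (ZZ G T)
     + L * (1 + cc) * \<alpha>\<^sup>2 * (\<Sum>s<T. (norm (xv G (Suc s)))\<^sup>2 + (norm (mv G (s - 1)))\<^sup>2)"
proof -
  have "\<alpha> * (\<Sum>s<T. df (th G s) \<bullet> xv G (Suc s)) = (\<Sum>s<T. \<alpha> * (df (th G s) \<bullet> xv G (Suc s)))"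
    by (simp add: sum_distrib_left)
  also have "\<dots> \<le> (\<Sum>s<T. (f (ZZ G s) - f (ZZ G (Suc s)))
     + L * (1 + cc) * \<alpha>\<^sup>2 * ((norm (xv G (Suc s)))\<^sup>2 + (norm (mv G (s - 1)))\<^sup>2))"
    by (rule sum_mono) (rule step_ineq)
  also have "\<dots> = f (ZZ G 0) - f (ZZ G T)
     + L * (1 + cc) * \<alpha>\<^sup>2 * (\<Sum>s<T. (norm (xv G (Suc s)))\<^sup>2 + (norm (mv G (s - 1)))\<^sup>2)"
    by (simp only: sum.distrib sum_lessThan_telescope'[of "\<lambda>s. f (ZZ G s)"] sum_distrib_left[symmetric])
  finally show ?thesis .
qed

lemma ZZ_0_bound:
  "f (ZZ G 0) \<le> f \<theta>0 + norm (df \<theta>0) * cc * \<alpha> * (1 + (norm (xv G 1))\<^sup>2)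
     + L * cc\<^sup>2 * \<alpha>\<^sup>2 * (norm (xv G 1))\<^sup>2"
proof -
  define x where "x = xv G 1"
  have z: "ZZ G 0 = \<theta>0 - (cc * \<alpha>) *\<^sub>R x" by (simp add: ZZ_def TH_0 MV_0 x_def)
  have "f (ZZ G 0) \<le> f \<theta>0 + df \<theta>0 \<bullet> (- (cc * \<alpha>) *\<^sub>R x) + L * (norm (- (cc * \<alpha>) *\<^sub>R x))\<^sup>2"
    using descent[OF grad smooth L0, of "ZZ G 0" \<theta>0] z by simp
  also have "df \<theta>0 \<bullet> (- (cc * \<alpha>) *\<^sub>R x) \<le> norm (df \<theta>0) * (cc * \<alpha> * norm x)"
    using norm_cauchy_schwarz[of "df \<theta>0" "- (cc * \<alpha>) *\<^sub>R x"] cc_nonneg al by simp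
  also have "norm (df \<theta>0) * (cc * \<alpha> * norm x) \<le> norm (df \<theta>0) * cc * \<alpha> * (1 + (norm x)\<^sup>2)"
  proof -
    have "norm x \<le> 1 + (norm x)\<^sup>2" using zero_le_power2[of "norm x - 1"] norm_ge_zero[of x]
      unfolding power2_eq_square by (simp add: algebra_simps) (smt (verit) norm_ge_zero)
    then show ?thesis using cc_nonneg al
      by (metis mult.assoc mult_left_mono mult_nonneg_nonneg norm_ge_zero)
  qed
  also have "(norm (- (cc * \<alpha>) *\<^sub>R x))\<^sup>2 = cc\<^sup>2 * \<alpha>\<^sup>2 * (norm x)\<^sup>2"
    using cc_nonneg al by (simp add: power_mult_distrib)
  finally show ?thesis unfolding x_def by (simp add: mult.assoc)
qed

end


lemma measurable_vec_nth[measurable (raw)]: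
  "(x :: 'm \<Rightarrow> real^'n) \<in> borel_measurable N \<Longrightarrow> (\<lambda>\<omega>. x \<omega> $ i) \<in> borel_measurable N"
  unfolding cart_eq_inner_axis by (intro borel_measurable_inner measurable_const) auto

lemma measurable_vec_lambda:
  assumes "\<And>i. (\<lambda>\<omega>. F \<omega> i) \<in> borel_measurable N"
  shows "(\<lambda>\<omega>. (\<chi> i. F \<omega> i) :: real^'n) \<in> borel_measurable N"
  unfolding borel_measurable_euclidean_space[where 'c="real^'n"]
proof
  fix b :: "real^'n" assume "b \<in> Basis"
  then obtain j where b: "b = axis j 1" by (auto simp: Basis_vec_def)
  show "(\<lambda>\<omega>. (\<chi> i. F \<omega> i) \<bullet> b) \<in> borel_measurable N"
    unfolding b inner_axis using assms[of j] by simp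
qed

context
  fixes \<alpha> \<beta>1 \<beta>2 \<epsilon> :: real and \<theta>0 :: "real^'D"
begin

lemma measurable_state:
  fixes N :: "'m measure" and G :: "'m \<Rightarrow> nat \<Rightarrow> real^'D"
  assumes "\<And>j. j \<le> Suc s \<Longrightarrow> (\<lambda>\<omega>. G \<omega> j) \<in> borel_measurable N"
  shows "(\<lambda>\<omega>. TH \<alpha> \<beta>1 \<beta>2 \<epsilon> \<theta>0 (G \<omega>) s) \<in> borel_measurable N
    \<and> (\<lambda>\<omega>. VV \<alpha> \<beta>1 \<beta>2 \<epsilon> \<theta>0 (G \<omega>) s) \<in> borel_measurable N
    \<and> (\<lambda>\<omega>. MV \<alpha> \<beta>1 \<beta>2 \<epsilon> \<theta>0 (G \<omega>) s) \<in> borel_measurable N"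
  using assms
proof (induction s)
  case 0
  have [measurable]: "(\<lambda>\<omega>. G \<omega> 0) \<in> borel_measurable N" "(\<lambda>\<omega>. G \<omega> 1) \<in> borel_measurable N"
    using 0 by auto
  have v: "(\<lambda>\<omega>. VV \<alpha> \<beta>1 \<beta>2 \<epsilon> \<theta>0 (G \<omega>) 0) \<in> borel_measurable N"
    unfolding VV_0 by (rule measurable_vec_lambda) measurable
  then have [measurable]: "(\<lambda>\<omega>. VV \<alpha> \<beta>1 \<beta>2 \<epsilon> \<theta>0 (G \<omega>) 0 $ i) \<in> borel_measurable N" for i
    by measurable
  have "(\<lambda>\<omega>. MV \<alpha> \<beta>1 \<beta>2 \<epsilon> \<theta>0 (G \<omega>) 0) \<in> borel_measurable N"
    unfolding MV_0 XV_def by (rule measurable_vec_lambda, simp only: diff_self_eq_0, measurable)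
  then show ?case using v by (simp add: TH_0)
next
  case (Suc s)
  then have IH: "(\<lambda>\<omega>. TH \<alpha> \<beta>1 \<beta>2 \<epsilon> \<theta>0 (G \<omega>) s) \<in> borel_measurable N"
    "(\<lambda>\<omega>. VV \<alpha> \<beta>1 \<beta>2 \<epsilon> \<theta>0 (G \<omega>) s) \<in> borel_measurable N"
    "(\<lambda>\<omega>. MV \<alpha> \<beta>1 \<beta>2 \<epsilon> \<theta>0 (G \<omega>) s) \<in> borel_measurable N" by auto
  note [measurable] = IH
  have [measurable]: "(\<lambda>\<omega>. G \<omega> (Suc s)) \<in> borel_measurable N" "(\<lambda>\<omega>. G \<omega> (Suc (Suc s))) \<in> borel_measurable N"
    using Suc.prems by auto
  have v: "(\<lambda>\<omega>. VV \<alpha> \<beta>1 \<beta>2 \<epsilon> \<theta>0 (G \<omega>) (Suc s)) \<in> borel_measurable N"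
    unfolding VV_Suc by (rule measurable_vec_lambda) measurable
  note [measurable] = v
  have x: "(\<lambda>\<omega>. XV \<alpha> \<beta>1 \<beta>2 \<epsilon> \<theta>0 (G \<omega>) (Suc (Suc s))) \<in> borel_measurable N"
    unfolding XV_def by (rule measurable_vec_lambda, simp only: diff_Suc_1, measurable)
  note [measurable] = x
  have "(\<lambda>\<omega>. MV \<alpha> \<beta>1 \<beta>2 \<epsilon> \<theta>0 (G \<omega>) (Suc s)) \<in> borel_measurable N"
    unfolding MV_Suc by measurable
  moreover have "(\<lambda>\<omega>. TH \<alpha> \<beta>1 \<beta>2 \<epsilon> \<theta>0 (G \<omega>) (Suc s)) \<in> borel_measurable N"
    unfolding TH_Suc by measurable
  ultimately show ?case using v by simp
qed

end


lemma norm_convex_sq: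
  fixes u w :: "'a::real_normed_vector"
  assumes "0 \<le> b" "b \<le> 1"
  shows "(norm (b *\<^sub>R u + (1 - b) *\<^sub>R w))\<^sup>2 \<le> b * (norm u)\<^sup>2 + (1 - b) * (norm w)\<^sup>2"
proof -
  have "norm (b *\<^sub>R u + (1 - b) *\<^sub>R w) \<le> b * norm u + (1 - b) * norm w"
    using norm_triangle_ineq[of "b *\<^sub>R u" "(1 - b) *\<^sub>R w"] assms by simp
  then have "(norm (b *\<^sub>R u + (1 - b) *\<^sub>R w))\<^sup>2 \<le> (b * norm u + (1 - b) * norm w)\<^sup>2"
    by (simp add: power_mono)
  also have "\<dots> \<le> b * (norm u)\<^sup>2 + (1 - b) * (norm w)\<^sup>2"
  proof -
    have "b * (norm u)\<^sup>2 + (1 - b) * (norm w)\<^sup>2 - (b * norm u + (1 - b) * norm w)\<^sup>2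
      = b * (1 - b) * (norm u - norm w)\<^sup>2" by (simp add: power2_eq_square algebra_simps)
    moreover have "b * (1 - b) * (norm u - norm w)\<^sup>2 \<ge> 0" using assms by simp
    ultimately show ?thesis by linarith
  qed
  finally show ?thesis .
qed

lemma powr_bound:
  fixes y Q d s :: real
  assumes "y \<ge> 0" "Q \<ge> 0" "d \<ge> 0" "s > 0" "y\<^sup>2 \<le> Q * d"
  shows "y powr (4/3) \<le> Q / s + s\<^sup>2 * d\<^sup>2"
proof (cases "y = 0")
  case True then show ?thesis using assms by simp
next
  case False
  then have yp: "y > 0" using assms by simp
  define w where "w = y powr (2/3)"
  have wp: "w > 0" using yp by (simp add: w_def)
  have w3: "w ^ 3 = y\<^sup>2"
  proof -
    have "w ^ 3 = w powr (real 3)" using wp by (simp add: powr_realpow)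
    also have "\<dots> = y powr 2" unfolding w_def powr_powr by simp
    finally show ?thesis using yp by (simp add: powr_realpow)
  qed
  have w2: "y powr (4/3) = w\<^sup>2"
  proof -
    have "w\<^sup>2 = w powr (real 2)" using wp by (simp add: powr_realpow)
    also have "\<dots> = y powr (4/3)" unfolding w_def powr_powr by simp
    finally show ?thesis by simp
  qed
  show ?thesis
  proof (cases "w \<le> s * d")
    case True
    then have "w\<^sup>2 \<le> (s * d)\<^sup>2" using wp by (intro power_mono) auto
    moreover have "Q / s \<ge> 0" using assms by simp
    ultimately show ?thesis using w2 by (simp add: power_mult_distrib)
  next
    case False
    then have "s * d < w" by simp
    then have "Q * (s * d) \<le> Q * w" using assms by (intro mult_left_mono) auto
    then have "s * w ^ 3 \<le> Q * w" using w3 assms(5) assms(4)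
      by (smt (verit) mult.commute mult.left_commute mult_left_mono)
    then have "s * w\<^sup>2 \<le> Q" using wp by (simp add: power3_eq_cube power2_eq_square mult.assoc)
    then have "w\<^sup>2 \<le> Q / s" using assms(4) by (simp add: field_simps)
    then show ?thesis using w2 assms by (smt (verit) zero_le_mult_iff zero_le_power2)
  qed
qed

context
  fixes \<alpha> \<beta>1 \<beta>2 \<epsilon> :: real and \<theta>0 :: "real^'D"
  assumes b1: "0 \<le> \<beta>1" "\<beta>1 < 1" and b2: "0 \<le> \<beta>2" "\<beta>2 < 1" and eps: "\<epsilon> > 0"
begin

lemma MV_conv: "(norm (MV \<alpha> \<beta>1 \<beta>2 \<epsilon> \<theta>0 G (Suc s)))\<^sup>2 \<le> \<beta>1 * (norm (MV \<alpha> \<beta>1 \<beta>2 \<epsilon> \<theta>0 G s))\<^sup>2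
   + (1 - \<beta>1) * (norm (XV \<alpha> \<beta>1 \<beta>2 \<epsilon> \<theta>0 G (Suc (Suc s))))\<^sup>2"
  unfolding MV_Suc using b1 by (intro norm_convex_sq) auto

lemma VV_nonneg: "VV \<alpha> \<beta>1 \<beta>2 \<epsilon> \<theta>0 G s $ i \<ge> 0"
  by (induction s) (use b2 in \<open>auto simp: VV_0 VV_Suc\<close>)

lemma SV_0: "(\<Sum>i\<in>UNIV. VV \<alpha> \<beta>1 \<beta>2 \<epsilon> \<theta>0 G 0 $ i) = (norm (G 0))\<^sup>2"
  unfolding norm_sq_vec by (simp add: VV_0 power2_eq_square)

lemma SV_Suc: "(\<Sum>i\<in>UNIV. VV \<alpha> \<beta>1 \<beta>2 \<epsilon> \<theta>0 G (Suc s) $ i)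
   = \<beta>2 * (\<Sum>i\<in>UNIV. VV \<alpha> \<beta>1 \<beta>2 \<epsilon> \<theta>0 G s $ i) + (1 - \<beta>2) * (norm (G (Suc s)))\<^sup>2"
  unfolding norm_sq_vec by (simp add: VV_Suc power2_eq_square sum.distrib sum_distrib_left)

lemma inner_XV: "a \<bullet> XV \<alpha> \<beta>1 \<beta>2 \<epsilon> \<theta>0 G (Suc s)
   = (\<Sum>i\<in>UNIV. (a $ i / max (sqrt (VV \<alpha> \<beta>1 \<beta>2 \<epsilon> \<theta>0 G s $ i)) \<epsilon>) * G (Suc s) $ i)"
  by (simp add: XV_def inner_vec_def)

lemma Q_bound:
  fixes a :: "real^'D"
  shows "(norm a)\<^sup>2 \<le> (\<Sum>i\<in>UNIV. (a $ i)\<^sup>2 / max (sqrt (VV \<alpha> \<beta>1 \<beta>2 \<epsilon> \<theta>0 G s $ i)) \<epsilon>)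
      * sqrt (\<epsilon>\<^sup>2 + (\<Sum>i\<in>UNIV. VV \<alpha> \<beta>1 \<beta>2 \<epsilon> \<theta>0 G s $ i))"
proof -
  define w where "w i = VV \<alpha> \<beta>1 \<beta>2 \<epsilon> \<theta>0 G s $ i" for i
  define D where "D = sqrt (\<epsilon>\<^sup>2 + (\<Sum>i\<in>UNIV. w i))"
  have w0: "w i \<ge> 0" for i by (simp add: w_def VV_nonneg)
  have Dp: "D > 0" using eps w0 by (simp add: D_def add_pos_nonneg sum_nonneg)
  have mx: "max (sqrt (w i)) \<epsilon> \<le> D" for i
  proof -
    have "w i \<le> (\<Sum>i\<in>UNIV. w i)" using w0 by (intro member_le_sum) auto
    then have "w i \<le> \<epsilon>\<^sup>2 + (\<Sum>i\<in>UNIV. w i)" using zero_le_power2[of \<epsilon>] by linarith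
    then have 1: "sqrt (w i) \<le> D" unfolding D_def by simp
    have "\<epsilon>\<^sup>2 \<le> \<epsilon>\<^sup>2 + (\<Sum>i\<in>UNIV. w i)" using w0 by (simp add: sum_nonneg)
    then have "sqrt (\<epsilon>\<^sup>2) \<le> D" unfolding D_def by (rule real_sqrt_le_mono)
    then have "\<epsilon> \<le> D" using eps by simp
    then show ?thesis using 1 by simp
  qed
  have "(norm a)\<^sup>2 / D = (\<Sum>i\<in>UNIV. (a $ i)\<^sup>2 / D)" by (simp add: norm_sq_vec sum_divide_distrib)
  also have "\<dots> \<le> (\<Sum>i\<in>UNIV. (a $ i)\<^sup>2 / max (sqrt (w i)) \<epsilon>)"
    using mx eps Dp by (intro sum_mono divide_left_mono) (auto intro!: mult_pos_pos)
  finally have "(norm a)\<^sup>2 / D \<le> (\<Sum>i\<in>UNIV. (a $ i)\<^sup>2 / max (sqrt (w i)) \<epsilon>)" .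
  then show ?thesis using Dp unfolding w_def[symmetric] D_def[symmetric] by (simp add: field_simps)
qed

end


context
  fixes \<alpha> \<beta>1 \<beta>2 \<epsilon> :: real and \<theta>0 :: "real^'D"
begin

lemma state_components_eq:
  assumes "adopt_state \<alpha> \<beta>1 \<beta>2 \<epsilon> \<theta>0 G s = adopt_state \<alpha> \<beta>1 \<beta>2 \<epsilon> \<theta>0 G' s"
  shows "TH \<alpha> \<beta>1 \<beta>2 \<epsilon> \<theta>0 G s = TH \<alpha> \<beta>1 \<beta>2 \<epsilon> \<theta>0 G' s"
    "VV \<alpha> \<beta>1 \<beta>2 \<epsilon> \<theta>0 G s = VV \<alpha> \<beta>1 \<beta>2 \<epsilon> \<theta>0 G' s"
    "MV \<alpha> \<beta>1 \<beta>2 \<epsilon> \<theta>0 G s = MV \<alpha> \<beta>1 \<beta>2 \<epsilon> \<theta>0 G' s"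
  using assms by (simp_all add: TH_def VV_def MV_def)

lemma measurable_state_g:
  fixes N :: "'m measure" and g :: "nat \<Rightarrow> 'm \<Rightarrow> real^'D"
  assumes "\<And>j. j \<le> Suc s \<Longrightarrow> g j \<in> borel_measurable N"
  shows "(\<lambda>\<omega>. TH \<alpha> \<beta>1 \<beta>2 \<epsilon> \<theta>0 (\<lambda>j. g j \<omega>) s) \<in> borel_measurable N"
    "(\<lambda>\<omega>. VV \<alpha> \<beta>1 \<beta>2 \<epsilon> \<theta>0 (\<lambda>j. g j \<omega>) s) \<in> borel_measurable N"
    "(\<lambda>\<omega>. MV \<alpha> \<beta>1 \<beta>2 \<epsilon> \<theta>0 (\<lambda>j. g j \<omega>) s) \<in> borel_measurable N"
proof -
  define G' where "G' \<omega> j = (if j \<le> Suc s then g j \<omega> else 0)" for \<omega> j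
  have m: "(\<lambda>\<omega>. G' \<omega> j) \<in> borel_measurable N" for j
    using assms[of j] by (cases "j \<le> Suc s") (simp_all add: G'_def)
  have eq: "adopt_state \<alpha> \<beta>1 \<beta>2 \<epsilon> \<theta>0 (\<lambda>j. g j \<omega>) s = adopt_state \<alpha> \<beta>1 \<beta>2 \<epsilon> \<theta>0 (G' \<omega>) s" for \<omega>
    by (rule state_cong) (simp add: G'_def)
  from measurable_state[of s G' N, OF m] show
    "(\<lambda>\<omega>. TH \<alpha> \<beta>1 \<beta>2 \<epsilon> \<theta>0 (\<lambda>j. g j \<omega>) s) \<in> borel_measurable N"
    "(\<lambda>\<omega>. VV \<alpha> \<beta>1 \<beta>2 \<epsilon> \<theta>0 (\<lambda>j. g j \<omega>) s) \<in> borel_measurable N"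
    "(\<lambda>\<omega>. MV \<alpha> \<beta>1 \<beta>2 \<epsilon> \<theta>0 (\<lambda>j. g j \<omega>) s) \<in> borel_measurable N"
    unfolding state_components_eq[OF eq] by auto
qed

lemma measurable_TH_VV_g:
  fixes N :: "'m measure" and g :: "nat \<Rightarrow> 'm \<Rightarrow> real^'D"
  assumes "\<And>j. j \<le> s \<Longrightarrow> g j \<in> borel_measurable N"
  shows "(\<lambda>\<omega>. TH \<alpha> \<beta>1 \<beta>2 \<epsilon> \<theta>0 (\<lambda>j. g j \<omega>) s) \<in> borel_measurable N"
    "(\<lambda>\<omega>. VV \<alpha> \<beta>1 \<beta>2 \<epsilon> \<theta>0 (\<lambda>j. g j \<omega>) s) \<in> borel_measurable N"
proof -
  define g' where "g' = (\<lambda>j \<omega>. if j \<le> s then g j \<omega> else (0::real^'D))"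
  have m: "g' j \<in> borel_measurable N" for j
    using assms[of j] by (cases "j \<le> s") (simp_all add: g'_def)
  have eq: "TH \<alpha> \<beta>1 \<beta>2 \<epsilon> \<theta>0 (\<lambda>j. g j \<omega>) s = TH \<alpha> \<beta>1 \<beta>2 \<epsilon> \<theta>0 (\<lambda>j. g' j \<omega>) s \<and>
     VV \<alpha> \<beta>1 \<beta>2 \<epsilon> \<theta>0 (\<lambda>j. g j \<omega>) s = VV \<alpha> \<beta>1 \<beta>2 \<epsilon> \<theta>0 (\<lambda>j. g' j \<omega>) s" for \<omega>
    by (rule TH_VV_cong) (simp add: g'_def)
  from measurable_state_g[of s g' N] m show
    "(\<lambda>\<omega>. TH \<alpha> \<beta>1 \<beta>2 \<epsilon> \<theta>0 (\<lambda>j. g j \<omega>) s) \<in> borel_measurable N"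
    "(\<lambda>\<omega>. VV \<alpha> \<beta>1 \<beta>2 \<epsilon> \<theta>0 (\<lambda>j. g j \<omega>) s) \<in> borel_measurable N"
    using eq by auto
qed

lemma gen_sigma_facts:
  fixes M :: "'m measure" and g :: "nat \<Rightarrow> 'm \<Rightarrow> real^'D"
  assumes "\<And>j. j < t \<Longrightarrow> g j \<in> borel_measurable M"
  shows "subalgebra M (gen_sigma M g t)"
    and "\<And>j. j < t \<Longrightarrow> g j \<in> borel_measurable (gen_sigma M g t)"
proof -
  define A where "A = (\<Union>i<t. {g i -` B \<inter> space M | B. B \<in> sets borel})"
  have AP: "A \<subseteq> Pow (space M)" by (auto simp: A_def)
  have AM: "A \<subseteq> sets M" using assms by (auto simp: A_def measurable_sets)
  have sp: "space (gen_sigma M g t) = space M" unfolding gen_sigma_def A_def[symmetric]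
    using AP by (simp add: space_measure_of)
  have st: "sets (gen_sigma M g t) = sigma_sets (space M) A" unfolding gen_sigma_def A_def[symmetric]
    using AP by (simp add: sets_measure_of)
  show "subalgebra M (gen_sigma M g t)"
    unfolding subalgebra_def sp st using AM by (simp add: sets.sigma_sets_subset)
  fix j assume j: "j < t"
  show "g j \<in> borel_measurable (gen_sigma M g t)"
  proof (rule measurableI)
    fix x assume "x \<in> space (gen_sigma M g t)" then show "g j x \<in> space borel" by simp
  next
    fix B :: "(real^'D) set" assume "B \<in> sets borel"
    then have "g j -` B \<inter> space M \<in> A" using j by (auto simp: A_def)
    then show "g j -` B \<inter> space (gen_sigma M g t) \<in> sets (gen_sigma M g t)"
      unfolding sp st by (rule sigma_sets.Basic)
  qed
qed

end



lemma int_dom: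
  fixes f h :: "'a \<Rightarrow> real"
  assumes "integrable M h" "f \<in> borel_measurable M" "\<And>\<omega>. \<bar>f \<omega>\<bar> \<le> h \<omega>"
  shows "integrable M f"
  by (rule Bochner_Integration.integrable_bound[OF assms(1,2)]) (auto intro: order_trans[OF assms(3) abs_ge_self])

context
  fixes \<alpha> \<beta>1 \<beta>2 \<epsilon> :: real and \<theta>0 :: "real^'D"
    and f :: "real^'D \<Rightarrow> real" and df :: "real^'D \<Rightarrow> real^'D" and L f_inf Gb :: real
    and T :: nat and M :: "'m measure" and g :: "nat \<Rightarrow> 'm \<Rightarrow> real^'D"
  assumes grad: "\<And>x. GDERIV f x :> df x"
    and smooth: "\<And>x y. norm (df x - df y) \<le> L * norm (x - y)" and L0: "L \<ge> 0"
    and b1: "0 \<le> \<beta>1" "\<beta>1 < 1" and b2: "0 \<le> \<beta>2" "\<beta>2 < 1" and eps: "\<epsilon> > 0"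
    and al: "\<alpha> \<ge> 0" and lower: "\<And>x. f x \<ge> f_inf"
    and PS: "prob_space M"
    and gm: "\<And>t. t \<le> T \<Longrightarrow> g t \<in> borel_measurable M"
    and mom: "\<And>t. t \<le> T \<Longrightarrow> (\<integral>\<^sup>+\<omega>. ennreal ((norm (g t \<omega>))\<^sup>2) \<partial>M) \<le> ennreal (Gb\<^sup>2)"
    and ce: "\<And>t i. t \<in> {1..T} \<Longrightarrow> AE \<omega> in M.
        real_cond_exp M (gen_sigma M g t) (\<lambda>\<omega>. g t \<omega> $ i) \<omega>
          = df (adopt_theta \<alpha> \<beta>1 \<beta>2 \<epsilon> \<theta>0 (\<lambda>s. g s \<omega>) (t - 1)) $ i"
begin

abbreviation "thR s \<omega> \<equiv> TH \<alpha> \<beta>1 \<beta>2 \<epsilon> \<theta>0 (\<lambda>j. g j \<omega>) s"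
abbreviation "vR s \<omega> \<equiv> VV \<alpha> \<beta>1 \<beta>2 \<epsilon> \<theta>0 (\<lambda>j. g j \<omega>) s"
abbreviation "mR s \<omega> \<equiv> MV \<alpha> \<beta>1 \<beta>2 \<epsilon> \<theta>0 (\<lambda>j. g j \<omega>) s"
abbreviation "xR s \<omega> \<equiv> XV \<alpha> \<beta>1 \<beta>2 \<epsilon> \<theta>0 (\<lambda>j. g j \<omega>) s"

lemma df_meas[measurable]: "df \<in> borel_measurable borel"
proof -
  have "L-lipschitz_on UNIV df" unfolding lipschitz_on_def using L0 smooth by (simp add: dist_norm)
  then show ?thesis by (intro borel_measurable_continuous_onI lipschitz_on_continuous_on)
qed

lemma m_th: "s < T \<Longrightarrow> (\<lambda>\<omega>. thR s \<omega>) \<in> borel_measurable M"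
  and m_m: "s < T \<Longrightarrow> (\<lambda>\<omega>. mR s \<omega>) \<in> borel_measurable M"
  using measurable_state_g[of s g M] gm by auto

lemma m_v: "s \<le> T \<Longrightarrow> (\<lambda>\<omega>. vR s \<omega>) \<in> borel_measurable M"
  using measurable_TH_VV_g[of s g M] gm by auto

lemma m_x: assumes "t \<le> T" "1 \<le> t" shows "(\<lambda>\<omega>. xR t \<omega>) \<in> borel_measurable M"
proof -
  have [measurable]: "(\<lambda>\<omega>. vR (t - 1) \<omega>) \<in> borel_measurable M" using assms by (intro m_v) auto
  have [measurable]: "g t \<in> borel_measurable M" using assms gm by auto
  show ?thesis unfolding XV_def by (rule measurable_vec_lambda) measurable
qed

lemma int_g: assumes "t \<le> T"
  shows "integrable M (\<lambda>\<omega>. (norm (g t \<omega>))\<^sup>2)" "(\<integral>\<omega>. (norm (g t \<omega>))\<^sup>2 \<partial>M) \<le> Gb\<^sup>2"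
proof -
  have [measurable]: "g t \<in> borel_measurable M" using gm assms by auto
  show i: "integrable M (\<lambda>\<omega>. (norm (g t \<omega>))\<^sup>2)"
    by (rule integrableI_nonneg) (use mom[OF assms] in \<open>auto simp: top.not_eq_extremum intro: le_less_trans\<close>)
  have "ennreal (\<integral>\<omega>. (norm (g t \<omega>))\<^sup>2 \<partial>M) \<le> ennreal (Gb\<^sup>2)"
    using mom[OF assms] nn_integral_eq_integral[OF i] by simp
  then show "(\<integral>\<omega>. (norm (g t \<omega>))\<^sup>2 \<partial>M) \<le> Gb\<^sup>2" by (simp add: ennreal_le_iff)
qed

lemma int_x: assumes "t \<le> T" "1 \<le> t"
  shows "integrable M (\<lambda>\<omega>. (norm (xR t \<omega>))\<^sup>2)" "(\<integral>\<omega>. (norm (xR t \<omega>))\<^sup>2 \<partial>M) \<le> Gb\<^sup>2 / \<epsilon>\<^sup>2"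
proof -
  have [measurable]: "(\<lambda>\<omega>. xR t \<omega>) \<in> borel_measurable M" using m_x assms by auto
  have b: "(norm (xR t \<omega>))\<^sup>2 \<le> (norm (g t \<omega>))\<^sup>2 / \<epsilon>\<^sup>2" for \<omega> using XV_norm[OF eps, where G="\<lambda>j. g j \<omega>"] by auto
  have ig: "integrable M (\<lambda>\<omega>. (norm (g t \<omega>))\<^sup>2 / \<epsilon>\<^sup>2)" using int_g[OF assms(1)] by simp
  show "integrable M (\<lambda>\<omega>. (norm (xR t \<omega>))\<^sup>2)" by (rule int_dom[OF ig]) (use b in auto)
  have "(\<integral>\<omega>. (norm (xR t \<omega>))\<^sup>2 \<partial>M) \<le> (\<integral>\<omega>. (norm (g t \<omega>))\<^sup>2 / \<epsilon>\<^sup>2 \<partial>M)"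
    by (rule integral_mono_AE'[OF ig]) (use b in auto)
  also have "\<dots> = (\<integral>\<omega>. (norm (g t \<omega>))\<^sup>2 \<partial>M) / \<epsilon>\<^sup>2" by simp
  also have "\<dots> \<le> Gb\<^sup>2 / \<epsilon>\<^sup>2" using int_g[OF assms(1)] by (simp add: divide_right_mono)
  finally show "(\<integral>\<omega>. (norm (xR t \<omega>))\<^sup>2 \<partial>M) \<le> Gb\<^sup>2 / \<epsilon>\<^sup>2" .
qed

lemma cvx_id: "\<beta>1 * X + (1 - \<beta>1) * X = (X::real)" by (simp add: algebra_simps)

lemma int_m: assumes "s < T"
  shows "integrable M (\<lambda>\<omega>. (norm (mR s \<omega>))\<^sup>2) \<and> (\<integral>\<omega>. (norm (mR s \<omega>))\<^sup>2 \<partial>M) \<le> Gb\<^sup>2 / \<epsilon>\<^sup>2"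
  using assms
proof (induction s)
  case 0
  then show ?case using int_x[of 1] by (simp add: MV_0)
next
  case (Suc s)
  then have IH: "integrable M (\<lambda>\<omega>. (norm (mR s \<omega>))\<^sup>2)" "(\<integral>\<omega>. (norm (mR s \<omega>))\<^sup>2 \<partial>M) \<le> Gb\<^sup>2 / \<epsilon>\<^sup>2"
    by auto
  have X: "integrable M (\<lambda>\<omega>. (norm (xR (Suc (Suc s)) \<omega>))\<^sup>2)"
    "(\<integral>\<omega>. (norm (xR (Suc (Suc s)) \<omega>))\<^sup>2 \<partial>M) \<le> Gb\<^sup>2 / \<epsilon>\<^sup>2"
    using int_x[of "Suc (Suc s)"] Suc.prems by auto
  define h where "h \<omega> = \<beta>1 * (norm (mR s \<omega>))\<^sup>2 + (1 - \<beta>1) * (norm (xR (Suc (Suc s)) \<omega>))\<^sup>2" for \<omega>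
  have ih: "integrable M h" unfolding h_def using IH X by auto
  have b: "(norm (mR (Suc s) \<omega>))\<^sup>2 \<le> h \<omega>" for \<omega> unfolding h_def by (rule MV_conv[OF b1 b2 eps])
  have [measurable]: "(\<lambda>\<omega>. mR (Suc s) \<omega>) \<in> borel_measurable M" using m_m Suc.prems by auto
  have "integrable M (\<lambda>\<omega>. (norm (mR (Suc s) \<omega>))\<^sup>2)" by (rule int_dom[OF ih]) (use b in auto)
  moreover have "(\<integral>\<omega>. (norm (mR (Suc s) \<omega>))\<^sup>2 \<partial>M) \<le> integral\<^sup>L M h"
    by (rule integral_mono_AE'[OF ih]) (use b b1 in \<open>auto simp: h_def intro!: add_nonneg_nonneg mult_nonneg_nonneg\<close>)
  moreover have "integral\<^sup>L M h = \<beta>1 * (\<integral>\<omega>. (norm (mR s \<omega>))\<^sup>2 \<partial>M) + (1 - \<beta>1) * (\<integral>\<omega>. (norm (xR (Suc (Suc s)) \<omega>))\<^sup>2 \<partial>M)"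
    unfolding h_def using IH X by simp
  moreover have "\<dots> \<le> \<beta>1 * (Gb\<^sup>2 / \<epsilon>\<^sup>2) + (1 - \<beta>1) * (Gb\<^sup>2 / \<epsilon>\<^sup>2)"
    using IH X b1 by (intro add_mono mult_left_mono) auto
  moreover have "\<beta>1 * (Gb\<^sup>2 / \<epsilon>\<^sup>2) + (1 - \<beta>1) * (Gb\<^sup>2 / \<epsilon>\<^sup>2) = Gb\<^sup>2 / \<epsilon>\<^sup>2"
    using cvx_id[of "Gb\<^sup>2 / \<epsilon>\<^sup>2"] .
  ultimately show ?case by linarith
qed


lemma cvx_id2: "b * X + (1 - b) * X = (X::real)" by (simp add: algebra_simps)

lemma int_v: assumes "s \<le> T"
  shows "integrable M (\<lambda>\<omega>. \<Sum>i\<in>UNIV. vR s \<omega> $ i) \<and> (\<integral>\<omega>. (\<Sum>i\<in>UNIV. vR s \<omega> $ i) \<partial>M) \<le> Gb\<^sup>2"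
  using assms
proof (induction s)
  case 0
  then show ?case using int_g[of 0] by (simp add: SV_0[OF b1 b2 eps])
next
  case (Suc s)
  then have IH: "integrable M (\<lambda>\<omega>. \<Sum>i\<in>UNIV. vR s \<omega> $ i)" "(\<integral>\<omega>. (\<Sum>i\<in>UNIV. vR s \<omega> $ i) \<partial>M) \<le> Gb\<^sup>2"
    by auto
  have X: "integrable M (\<lambda>\<omega>. (norm (g (Suc s) \<omega>))\<^sup>2)" "(\<integral>\<omega>. (norm (g (Suc s) \<omega>))\<^sup>2 \<partial>M) \<le> Gb\<^sup>2"
    using int_g[of "Suc s"] Suc.prems by auto
  have eq: "(\<lambda>\<omega>. \<Sum>i\<in>UNIV. vR (Suc s) \<omega> $ i) = (\<lambda>\<omega>. \<beta>2 * (\<Sum>i\<in>UNIV. vR s \<omega> $ i) + (1 - \<beta>2) * (norm (g (Suc s) \<omega>))\<^sup>2)"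
    by (simp add: SV_Suc[OF b1 b2 eps])
  have "(\<integral>\<omega>. (\<Sum>i\<in>UNIV. vR (Suc s) \<omega> $ i) \<partial>M) = \<beta>2 * (\<integral>\<omega>. (\<Sum>i\<in>UNIV. vR s \<omega> $ i) \<partial>M) + (1 - \<beta>2) * (\<integral>\<omega>. (norm (g (Suc s) \<omega>))\<^sup>2 \<partial>M)"
    unfolding eq using IH X by simp
  also have "\<dots> \<le> \<beta>2 * Gb\<^sup>2 + (1 - \<beta>2) * Gb\<^sup>2"
    using IH X b2 by (intro add_mono mult_left_mono) auto
  also have "\<dots> = Gb\<^sup>2" by (rule cvx_id2)
  finally show ?case unfolding eq using IH X by simp
qed

lemma ab_sq: assumes "0 \<le> a" "0 \<le> (b::real)" shows "a * b \<le> a\<^sup>2 + b\<^sup>2"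
proof -
  have "0 \<le> (a - b)\<^sup>2" by simp
  then have "2 * (a * b) \<le> a\<^sup>2 + b\<^sup>2" by (simp add: power2_eq_square algebra_simps)
  moreover have "0 \<le> a * b" using assms by simp
  ultimately show ?thesis by linarith
qed

lemma sq2: "(p + q)\<^sup>2 \<le> 2 * p\<^sup>2 + 2 * (q::real)\<^sup>2"
  using zero_le_power2[of "p - q"] by (simp add: power2_eq_square algebra_simps)

lemma int_th: assumes "s < T" shows "integrable M (\<lambda>\<omega>. (norm (thR s \<omega>))\<^sup>2)"
  using assms
proof (induction s)
  case 0
  interpret prob_space M by (rule PS)
  show ?case by (simp add: TH_0)
next
  case (Suc s)
  then have IH: "integrable M (\<lambda>\<omega>. (norm (thR s \<omega>))\<^sup>2)" by auto
  have Mi: "integrable M (\<lambda>\<omega>. (norm (mR s \<omega>))\<^sup>2)" using int_m[of s] Suc.prems by auto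
  have [measurable]: "(\<lambda>\<omega>. thR (Suc s) \<omega>) \<in> borel_measurable M" using m_th Suc.prems by auto
  have b: "(norm (thR (Suc s) \<omega>))\<^sup>2 \<le> 2 * (norm (thR s \<omega>))\<^sup>2 + 2 * (\<alpha>\<^sup>2 * (norm (mR s \<omega>))\<^sup>2)" for \<omega>
  proof -
    have "norm (thR (Suc s) \<omega>) \<le> norm (thR s \<omega>) + \<alpha> * norm (mR s \<omega>)"
      unfolding TH_Suc using norm_triangle_ineq4[of "thR s \<omega>" "\<alpha> *\<^sub>R mR s \<omega>"] al by simp
    then have "(norm (thR (Suc s) \<omega>))\<^sup>2 \<le> (norm (thR s \<omega>) + \<alpha> * norm (mR s \<omega>))\<^sup>2"
      by (intro power_mono) auto
    also have "\<dots> \<le> 2 * (norm (thR s \<omega>))\<^sup>2 + 2 * (\<alpha> * norm (mR s \<omega>))\<^sup>2" by (rule sq2)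
    finally show ?thesis by (simp add: power_mult_distrib)
  qed
  show ?case by (rule int_dom[of M "\<lambda>\<omega>. 2 * (norm (thR s \<omega>))\<^sup>2 + 2 * (\<alpha>\<^sup>2 * (norm (mR s \<omega>))\<^sup>2)"])
    (use IH Mi b in auto)
qed

lemma int_df: assumes "s < T" shows "integrable M (\<lambda>\<omega>. (norm (df (thR s \<omega>)))\<^sup>2)"
proof -
  interpret prob_space M by (rule PS)
  have [measurable]: "(\<lambda>\<omega>. thR s \<omega>) \<in> borel_measurable M" using m_th assms by auto
  have b: "(norm (df (thR s \<omega>)))\<^sup>2 \<le> 2 * (norm (df \<theta>0))\<^sup>2 + 2 * (2 * (L * norm (thR s \<omega>))\<^sup>2 + 2 * (L * norm \<theta>0)\<^sup>2)" for \<omega>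
  proof -
    have "norm (df (thR s \<omega>)) \<le> norm (df \<theta>0) + norm (df (thR s \<omega>) - df \<theta>0)"
      by (metis add_diff_cancel_left' norm_triangle_ineq4 diff_add_cancel norm_triangle_ineq add.commute)
    also have "norm (df (thR s \<omega>) - df \<theta>0) \<le> L * norm (thR s \<omega> - \<theta>0)" by (rule smooth)
    also have "L * norm (thR s \<omega> - \<theta>0) \<le> L * norm (thR s \<omega>) + L * norm \<theta>0"
      using L0 norm_triangle_ineq4[of "thR s \<omega>" \<theta>0] by (simp add: distrib_left[symmetric] mult_left_mono)
    finally have "(norm (df (thR s \<omega>)))\<^sup>2 \<le> (norm (df \<theta>0) + (L * norm (thR s \<omega>) + L * norm \<theta>0))\<^sup>2"
      by (intro power_mono) auto
    also have "\<dots> \<le> 2 * (norm (df \<theta>0))\<^sup>2 + 2 * (L * norm (thR s \<omega>) + L * norm \<theta>0)\<^sup>2" by (rule sq2)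
    also have "(L * norm (thR s \<omega>) + L * norm \<theta>0)\<^sup>2 \<le> 2 * (L * norm (thR s \<omega>))\<^sup>2 + 2 * (L * norm \<theta>0)\<^sup>2"
      by (rule sq2)
    finally show ?thesis by simp
  qed
  show ?thesis
    by (rule int_dom[of M "\<lambda>\<omega>. 2 * (norm (df \<theta>0))\<^sup>2 + 2 * (2 * (L * norm (thR s \<omega>))\<^sup>2 + 2 * (L * norm \<theta>0)\<^sup>2)"])
      (use int_th[OF assms] b in \<open>auto simp: power_mult_distrib\<close>)
qed


abbreviation "QR s \<omega> \<equiv> (\<Sum>i\<in>UNIV. (df (thR s \<omega>) $ i)\<^sup>2 / max (sqrt (vR s \<omega> $ i)) \<epsilon>)"

lemma ce_step: assumes sT: "s < T"
  shows "integrable M (\<lambda>\<omega>. df (thR s \<omega>) \<bullet> xR (Suc s) \<omega>)" "integrable M (QR s)"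
    "(\<integral>\<omega>. df (thR s \<omega>) \<bullet> xR (Suc s) \<omega> \<partial>M) = (\<integral>\<omega>. QR s \<omega> \<partial>M)"
proof -
  define F where "F = gen_sigma M g (Suc s)"
  have gF: "\<And>j. j < Suc s \<Longrightarrow> g j \<in> borel_measurable M" using gm sT by auto
  have sub: "subalgebra M F" unfolding F_def by (rule gen_sigma_facts(1)[OF gF])
  have gFm: "\<And>j. j \<le> s \<Longrightarrow> g j \<in> borel_measurable F" unfolding F_def
    by (rule gen_sigma_facts(2)[OF gF]) auto
  have fm: "finite_measure M" using PS unfolding prob_space_def by simp
  have sfs: "sigma_finite_subalgebra M F"
    by (rule finite_measure_subalgebra_is_sigma_finite)
      (use fm sub in \<open>simp add: finite_measure_subalgebra_def finite_measure_subalgebra_axioms_def\<close>)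
  have [measurable]: "(\<lambda>\<omega>. thR s \<omega>) \<in> borel_measurable F" "(\<lambda>\<omega>. vR s \<omega>) \<in> borel_measurable F"
    using measurable_TH_VV_g[of s g F] gFm by auto
  have [measurable]: "(\<lambda>\<omega>. thR s \<omega>) \<in> borel_measurable M" "(\<lambda>\<omega>. vR s \<omega>) \<in> borel_measurable M"
    using m_th m_v sT by auto
  have [measurable]: "g (Suc s) \<in> borel_measurable M" using gm sT by auto
  define h where "h i \<omega> = df (thR s \<omega>) $ i / max (sqrt (vR s \<omega> $ i)) \<epsilon>" for i \<omega>
  have hF[measurable]: "h i \<in> borel_measurable F" for i unfolding h_def by measurable
  have hM[measurable]: "h i \<in> borel_measurable M" for i unfolding h_def by measurable
  have dfg: "integrable M (\<lambda>\<omega>. (norm (df (thR s \<omega>)))\<^sup>2 / \<epsilon>\<^sup>2 + (norm (g (Suc s) \<omega>))\<^sup>2)"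
    using int_df[OF sT] int_g[of "Suc s"] sT by auto
  have hb: "\<bar>h i \<omega>\<bar> \<le> norm (df (thR s \<omega>)) / \<epsilon>" for i \<omega>
  proof -
    have "\<bar>h i \<omega>\<bar> = \<bar>df (thR s \<omega>) $ i\<bar> / max (sqrt (vR s \<omega> $ i)) \<epsilon>"
      using eps by (simp add: h_def abs_divide)
    also have "\<dots> \<le> \<bar>df (thR s \<omega>) $ i\<bar> / \<epsilon>" using eps by (intro divide_left_mono) auto
    also have "\<dots> \<le> norm (df (thR s \<omega>)) / \<epsilon>" using eps component_le_norm_cart
      by (intro divide_right_mono) auto
    finally show ?thesis .
  qed
  have prodb: "\<bar>h i \<omega> * g (Suc s) \<omega> $ i\<bar> \<le> (norm (df (thR s \<omega>)))\<^sup>2 / \<epsilon>\<^sup>2 + (norm (g (Suc s) \<omega>))\<^sup>2" for i \<omega>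
  proof -
    have "\<bar>h i \<omega> * g (Suc s) \<omega> $ i\<bar> \<le> (norm (df (thR s \<omega>)) / \<epsilon>) * norm (g (Suc s) \<omega>)"
      unfolding abs_mult using hb component_le_norm_cart eps by (intro mult_mono) auto
    also have "\<dots> \<le> (norm (df (thR s \<omega>)) / \<epsilon>)\<^sup>2 + (norm (g (Suc s) \<omega>))\<^sup>2"
      by (rule ab_sq) (use eps in auto)
    finally show ?thesis by (simp add: power_divide)
  qed
  have ihg: "integrable M (\<lambda>\<omega>. h i \<omega> * g (Suc s) \<omega> $ i)" for i
    by (rule int_dom[OF dfg]) (use prodb in auto)
  have qb: "\<bar>h i \<omega> * df (thR s \<omega>) $ i\<bar> \<le> (norm (df (thR s \<omega>)))\<^sup>2 / \<epsilon>" for i \<omega>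
  proof -
    have "\<bar>h i \<omega> * df (thR s \<omega>) $ i\<bar> \<le> (norm (df (thR s \<omega>)) / \<epsilon>) * norm (df (thR s \<omega>))"
      unfolding abs_mult using hb component_le_norm_cart eps by (intro mult_mono) auto
    then show ?thesis by (simp add: power2_eq_square)
  qed
  have ihd: "integrable M (\<lambda>\<omega>. h i \<omega> * df (thR s \<omega>) $ i)" for i
    by (rule int_dom[of M "\<lambda>\<omega>. (norm (df (thR s \<omega>)))\<^sup>2 / \<epsilon>"]) (use int_df[OF sT] qb in auto)
  have eqi: "(\<integral>\<omega>. h i \<omega> * g (Suc s) \<omega> $ i \<partial>M) = (\<integral>\<omega>. h i \<omega> * df (thR s \<omega>) $ i \<partial>M)" for i
  proof -
    have gi[measurable]: "(\<lambda>\<omega>. g (Suc s) \<omega> $ i) \<in> borel_measurable M" by measurable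
    have "(\<integral>\<omega>. h i \<omega> * g (Suc s) \<omega> $ i \<partial>M) = (\<integral>\<omega>. h i \<omega> * real_cond_exp M F (\<lambda>\<omega>. g (Suc s) \<omega> $ i) \<omega> \<partial>M)"
      using sigma_finite_subalgebra.real_cond_exp_intg(2)[OF sfs ihg hF gi] by simp
    also have "\<dots> = (\<integral>\<omega>. h i \<omega> * df (thR s \<omega>) $ i \<partial>M)"
    proof (rule integral_cong_AE)
      show "(\<lambda>\<omega>. h i \<omega> * real_cond_exp M F (\<lambda>\<omega>. g (Suc s) \<omega> $ i) \<omega>) \<in> borel_measurable M"
        by measurable
      show "(\<lambda>\<omega>. h i \<omega> * df (thR s \<omega>) $ i) \<in> borel_measurable M" by measurable
      have "AE \<omega> in M. real_cond_exp M F (\<lambda>\<omega>. g (Suc s) \<omega> $ i) \<omega> = df (thR s \<omega>) $ i"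
        using ce[of "Suc s" i] sT unfolding F_def TH_adopt by simp
      then show "AE \<omega> in M. h i \<omega> * real_cond_exp M F (\<lambda>\<omega>. g (Suc s) \<omega> $ i) \<omega> = h i \<omega> * df (thR s \<omega>) $ i"
        by eventually_elim simp
    qed
    finally show ?thesis .
  qed
  have pt1: "df (thR s \<omega>) \<bullet> xR (Suc s) \<omega> = (\<Sum>i\<in>UNIV. h i \<omega> * g (Suc s) \<omega> $ i)" for \<omega>
    unfolding h_def by (rule inner_XV[OF b1 b2 eps])
  have pt2: "QR s \<omega> = (\<Sum>i\<in>UNIV. h i \<omega> * df (thR s \<omega>) $ i)" for \<omega>
    unfolding h_def by (simp add: power2_eq_square)
  show "integrable M (\<lambda>\<omega>. df (thR s \<omega>) \<bullet> xR (Suc s) \<omega>)" unfolding pt1 using ihg by auto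
  show "integrable M (QR s)" unfolding pt2 using ihd by auto
  show "(\<integral>\<omega>. df (thR s \<omega>) \<bullet> xR (Suc s) \<omega> \<partial>M) = (\<integral>\<omega>. QR s \<omega> \<partial>M)"
    unfolding pt1 pt2 using ihg ihd eqi by (simp add: integral_sum)
qed


lemma main_sum: assumes T1: "1 \<le> T"
  shows "\<alpha> * (\<Sum>s<T. \<integral>\<omega>. QR s \<omega> \<partial>M) \<le> f \<theta>0 - f_inf + norm (df \<theta>0) * cc \<beta>1 * \<alpha> * (1 + Gb\<^sup>2 / \<epsilon>\<^sup>2)
     + L * (cc \<beta>1)\<^sup>2 * \<alpha>\<^sup>2 * (Gb\<^sup>2 / \<epsilon>\<^sup>2) + L * (1 + cc \<beta>1) * \<alpha>\<^sup>2 * (real T * (2 * (Gb\<^sup>2 / \<epsilon>\<^sup>2)))"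
proof -
  interpret prob_space M by (rule PS)
  define B where "B = Gb\<^sup>2 / \<epsilon>\<^sup>2"
  define c where "c = cc \<beta>1"
  have c0: "c \<ge> 0" unfolding c_def using cc_nonneg[OF grad smooth L0 b1 al] .
  define X1 where "X1 \<omega> = (norm (xR 1 \<omega>))\<^sup>2" for \<omega>
  define S where "S \<omega> = (\<Sum>s<T. (norm (xR (Suc s) \<omega>))\<^sup>2 + (norm (mR (s - 1) \<omega>))\<^sup>2)" for \<omega>
  define P where "P \<omega> = \<alpha> * (\<Sum>s<T. df (thR s \<omega>) \<bullet> xR (Suc s) \<omega>)" for \<omega>
  define a1 where "a1 = norm (df \<theta>0) * c * \<alpha>"
  define a2 where "a2 = L * c\<^sup>2 * \<alpha>\<^sup>2"
  define a3 where "a3 = L * (1 + c) * \<alpha>\<^sup>2"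
  define R where "R \<omega> = (f \<theta>0 - f_inf) + a1 * (1 + X1 \<omega>) + a2 * X1 \<omega> + a3 * S \<omega>" for \<omega>
  have a0: "a1 \<ge> 0" "a2 \<ge> 0" "a3 \<ge> 0" unfolding a1_def a2_def a3_def using c0 al L0 by auto
  have PR: "P \<omega> \<le> R \<omega>" for \<omega>
  proof -
    have tel: "\<alpha> * (\<Sum>s<T. df (thR s \<omega>) \<bullet> xR (Suc s) \<omega>) \<le> f (ZZ \<alpha> \<beta>1 \<beta>2 \<epsilon> \<theta>0 (\<lambda>j. g j \<omega>) 0)
      - f (ZZ \<alpha> \<beta>1 \<beta>2 \<epsilon> \<theta>0 (\<lambda>j. g j \<omega>) T)
      + L * (1 + cc \<beta>1) * \<alpha>\<^sup>2 * (\<Sum>s<T. (norm (xR (Suc s) \<omega>))\<^sup>2 + (norm (mR (s - 1) \<omega>))\<^sup>2)"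
      by (rule telescope[OF grad smooth L0 b1 al])
    have z0: "f (ZZ \<alpha> \<beta>1 \<beta>2 \<epsilon> \<theta>0 (\<lambda>j. g j \<omega>) 0) \<le> f \<theta>0 + norm (df \<theta>0) * cc \<beta>1 * \<alpha> * (1 + (norm (xR 1 \<omega>))\<^sup>2)
     + L * (cc \<beta>1)\<^sup>2 * \<alpha>\<^sup>2 * (norm (xR 1 \<omega>))\<^sup>2"
      by (rule ZZ_0_bound[OF grad smooth L0 b1 al])
    have "f_inf \<le> f (ZZ \<alpha> \<beta>1 \<beta>2 \<epsilon> \<theta>0 (\<lambda>j. g j \<omega>) T)" by (rule lower)
    then show ?thesis using tel z0 unfolding P_def R_def a1_def a2_def a3_def X1_def S_def c_def
      by linarith
  qed
  have iX1: "integrable M X1" and eX1: "integral\<^sup>L M X1 \<le> B"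
    using int_x[of 1] T1 unfolding X1_def B_def by auto
  have iS: "integrable M S" and eS: "integral\<^sup>L M S \<le> real T * (2 * B)"
  proof -
    have ix: "s < T \<Longrightarrow> integrable M (\<lambda>\<omega>. (norm (xR (Suc s) \<omega>))\<^sup>2) \<and> (\<integral>\<omega>. (norm (xR (Suc s) \<omega>))\<^sup>2 \<partial>M) \<le> B" for s
      using int_x[of "Suc s"] unfolding B_def by auto
    have im: "s < T \<Longrightarrow> integrable M (\<lambda>\<omega>. (norm (mR (s - 1) \<omega>))\<^sup>2) \<and> (\<integral>\<omega>. (norm (mR (s - 1) \<omega>))\<^sup>2 \<partial>M) \<le> B" for s
      using int_m[of "s - 1"] unfolding B_def by auto
    show "integrable M S" unfolding S_def using ix im by auto
    have "integral\<^sup>L M S = (\<Sum>s<T. (\<integral>\<omega>. (norm (xR (Suc s) \<omega>))\<^sup>2 \<partial>M) + (\<integral>\<omega>. (norm (mR (s - 1) \<omega>))\<^sup>2 \<partial>M))"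
      unfolding S_def using ix im by (simp add: integral_sum)
    also have "\<dots> \<le> (\<Sum>s<T. 2 * B)" by (rule sum_mono) (use ix im in \<open>fastforce\<close>)
    also have "\<dots> = real T * (2 * B)" by simp
    finally show "integral\<^sup>L M S \<le> real T * (2 * B)" .
  qed
  have iR: "integrable M R" unfolding R_def using iX1 iS by auto
  have eR: "integral\<^sup>L M R = (f \<theta>0 - f_inf) + a1 * (1 + integral\<^sup>L M X1) + a2 * integral\<^sup>L M X1 + a3 * integral\<^sup>L M S"
    unfolding R_def using iX1 iS by (simp add: prob_space)
  have iP: "integrable M P" unfolding P_def using ce_step(1) by auto
  have eP: "integral\<^sup>L M P = \<alpha> * (\<Sum>s<T. \<integral>\<omega>. QR s \<omega> \<partial>M)"
    unfolding P_def using ce_step(1,3) by (simp add: integral_sum)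
  have "integral\<^sup>L M P \<le> integral\<^sup>L M R" by (rule integral_mono[OF iP iR PR])
  also have "\<dots> \<le> (f \<theta>0 - f_inf) + a1 * (1 + B) + a2 * B + a3 * (real T * (2 * B))"
    unfolding eR using a0 eX1 eS by (intro add_mono mult_left_mono order_refl) auto
  finally show ?thesis unfolding eP a1_def a2_def a3_def B_def c_def by simp
qed


lemma pow_step: assumes sT: "s < T" and sg: "\<sigma> > 0"
  shows "(\<integral>\<omega>. (norm (df (thR s \<omega>))) powr (4/3) \<partial>M) \<le> (\<integral>\<omega>. QR s \<omega> \<partial>M) / \<sigma> + \<sigma>\<^sup>2 * (\<epsilon>\<^sup>2 + Gb\<^sup>2)"
proof -
  interpret prob_space M by (rule PS)
  define V where "V \<omega> = (\<Sum>i\<in>UNIV. vR s \<omega> $ i)" for \<omega>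
  have V0: "V \<omega> \<ge> 0" for \<omega> unfolding V_def by (intro sum_nonneg) (simp add: VV_nonneg[OF b1 b2 eps])
  have Q0: "QR s \<omega> \<ge> 0" for \<omega> using eps by (intro sum_nonneg divide_nonneg_pos) auto
  have iQ: "integrable M (QR s)" using ce_step(2)[OF sT] .
  have iV: "integrable M V" and eV: "integral\<^sup>L M V \<le> Gb\<^sup>2" using int_v[of s] sT unfolding V_def by auto
  define R where "R \<omega> = QR s \<omega> / \<sigma> + \<sigma>\<^sup>2 * (\<epsilon>\<^sup>2 + V \<omega>)" for \<omega>
  have iR: "integrable M R" unfolding R_def using iQ iV by auto
  have pt: "(norm (df (thR s \<omega>))) powr (4/3) \<le> R \<omega>" for \<omega>
  proof -
    have d2: "(sqrt (\<epsilon>\<^sup>2 + V \<omega>))\<^sup>2 = \<epsilon>\<^sup>2 + V \<omega>" using V0[of \<omega>] by simp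
    have "(norm (df (thR s \<omega>))) powr (4/3) \<le> QR s \<omega> / \<sigma> + \<sigma>\<^sup>2 * (sqrt (\<epsilon>\<^sup>2 + V \<omega>))\<^sup>2"
      by (rule powr_bound) (use Q0 sg Q_bound[OF b1 b2 eps] V0[of \<omega>] in \<open>auto simp: V_def\<close>)
    then show ?thesis unfolding R_def d2 .
  qed
  have R0: "R \<omega> \<ge> 0" for \<omega> unfolding R_def using Q0 V0 sg by auto
  have "(\<integral>\<omega>. (norm (df (thR s \<omega>))) powr (4/3) \<partial>M) \<le> integral\<^sup>L M R"
    by (rule integral_mono_AE'[OF iR]) (use pt R0 in auto)
  also have "integral\<^sup>L M R = (\<integral>\<omega>. QR s \<omega> \<partial>M) / \<sigma> + \<sigma>\<^sup>2 * (\<epsilon>\<^sup>2 + integral\<^sup>L M V)"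
    unfolding R_def using iQ iV by (simp add: prob_space)
  also have "\<dots> \<le> (\<integral>\<omega>. QR s \<omega> \<partial>M) / \<sigma> + \<sigma>\<^sup>2 * (\<epsilon>\<^sup>2 + Gb\<^sup>2)"
    using eV by (intro add_mono mult_left_mono) auto
  finally show ?thesis .
qed

end


theorem theorem4p1:
  fixes f :: "real^'D \<Rightarrow> real" and df :: "real^'D \<Rightarrow> real^'D"
    and f_inf L \<beta>1 \<beta>2 \<epsilon> a1 a2 G :: real and \<theta>0 :: "real^'D"
  assumes grad: "\<And>x. GDERIV f x :> df x"
    and lower: "\<And>x. f x \<ge> f_inf"
    and Lpos: "L > 0"
    and smooth: "\<And>x y. norm (df x - df y) \<le> L * norm (x - y)"
    and b1: "0 \<le> \<beta>1" "\<beta>1 < 1" and b2: "0 \<le> \<beta>2" "\<beta>2 < 1"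
    and eps: "\<epsilon> > 0"
    and a: "0 < a1" "a1 \<le> a2"
    and Gpos: "G > 0"
  shows "\<exists>K. \<forall>(T::nat) (\<alpha>::real) (M::'m measure) (g :: nat \<Rightarrow> 'm \<Rightarrow> real^'D).
           T \<ge> 1 \<longrightarrow> a1 / sqrt T \<le> \<alpha> \<longrightarrow> \<alpha> \<le> a2 / sqrt T \<longrightarrow>
           prob_space M \<longrightarrow>
           (\<forall>t\<le>T. g t \<in> borel_measurable M) \<longrightarrow>
           (\<forall>t\<le>T. (\<integral>\<^sup>+ \<omega>. ennreal ((norm (g t \<omega>))\<^sup>2) \<partial>M) \<le> ennreal (G\<^sup>2)) \<longrightarrow>
           (\<forall>t\<in>{1..T}. \<forall>i. AE \<omega> in M.
               real_cond_exp M (gen_sigma M g t) (\<lambda>\<omega>. g t \<omega> $ i) \<omega>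
                 = df (adopt_theta \<alpha> \<beta>1 \<beta>2 \<epsilon> \<theta>0 (\<lambda>s. g s \<omega>) (t - 1)) $ i) \<longrightarrow>
           (MIN t\<in>{1..T}. (\<integral>\<omega>. (norm (df (adopt_theta \<alpha> \<beta>1 \<beta>2 \<epsilon> \<theta>0 (\<lambda>s. g s \<omega>) (t - 1)))) powr (4/3) \<partial>M) powr (3/2))
             \<le> K / sqrt T"
proof -
  define c where "c = cc \<beta>1"
  define B where "B = G\<^sup>2 / \<epsilon>\<^sup>2"
  define C1 where "C1 = (f \<theta>0 - f_inf) / a1 + norm (df \<theta>0) * c * (1 + B) + L * c\<^sup>2 * a2 * B
     + 2 * L * (1 + c) * a2 * B"
  define P where "P = \<epsilon>\<^sup>2 + G\<^sup>2"
  define K where "K = (C1 + P) powr (3/2)"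
  have L0: "L \<ge> 0" using Lpos by simp
  have c0: "c \<ge> 0" unfolding c_def by (rule cc_nonneg[OF grad smooth L0 b1 order_refl])
  have B0: "B \<ge> 0" unfolding B_def by simp
  have D0: "f \<theta>0 - f_inf \<ge> 0" using lower[of \<theta>0] by simp
  have C10: "C1 \<ge> 0" unfolding C1_def using c0 B0 D0 L0 a by (intro add_nonneg_nonneg mult_nonneg_nonneg) auto
  have P0: "P \<ge> 0" unfolding P_def by simp
  show ?thesis
  proof (intro exI[of _ K] allI impI)
    fix T :: nat and \<alpha> :: real and M :: "'m measure" and g :: "nat \<Rightarrow> 'm \<Rightarrow> real^'D"
    assume T1: "T \<ge> 1" and al1: "a1 / sqrt T \<le> \<alpha>" and al2: "\<alpha> \<le> a2 / sqrt T"
      and PS: "prob_space M"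
      and gm0: "\<forall>t\<le>T. g t \<in> borel_measurable M"
      and mom0: "\<forall>t\<le>T. (\<integral>\<^sup>+ \<omega>. ennreal ((norm (g t \<omega>))\<^sup>2) \<partial>M) \<le> ennreal (G\<^sup>2)"
      and ce0: "\<forall>t\<in>{1..T}. \<forall>i. AE \<omega> in M.
               real_cond_exp M (gen_sigma M g t) (\<lambda>\<omega>. g t \<omega> $ i) \<omega>
                 = df (adopt_theta \<alpha> \<beta>1 \<beta>2 \<epsilon> \<theta>0 (\<lambda>s. g s \<omega>) (t - 1)) $ i"
    have gm: "\<And>t. t \<le> T \<Longrightarrow> g t \<in> borel_measurable M" using gm0 by auto
    have mom: "\<And>t. t \<le> T \<Longrightarrow> (\<integral>\<^sup>+ \<omega>. ennreal ((norm (g t \<omega>))\<^sup>2) \<partial>M) \<le> ennreal (G\<^sup>2)" using mom0 by auto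
    have ce: "\<And>t i. t \<in> {1..T} \<Longrightarrow> AE \<omega> in M.
               real_cond_exp M (gen_sigma M g t) (\<lambda>\<omega>. g t \<omega> $ i) \<omega>
                 = df (adopt_theta \<alpha> \<beta>1 \<beta>2 \<epsilon> \<theta>0 (\<lambda>s. g s \<omega>) (t - 1)) $ i" using ce0 by auto
    define r where "r = sqrt (real T)"
    have r1: "r \<ge> 1" unfolding r_def using T1 by simp
    have rT: "r\<^sup>2 = real T" unfolding r_def by simp
    have alr1: "a1 \<le> \<alpha> * r" using al1 r1 unfolding r_def[symmetric] by (simp add: field_simps)
    have alr2: "\<alpha> * r \<le> a2" using al2 r1 unfolding r_def[symmetric] by (simp add: field_simps)
    have alp: "\<alpha> > 0" using alr1 a r1 by (smt (verit) mult_nonpos_nonneg)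
    note H = grad smooth L0 b1 b2 eps less_imp_le[OF alp] lower PS gm mom ce
    define E where "E s = integral\<^sup>L M (QR \<alpha> \<beta>1 \<beta>2 \<epsilon> \<theta>0 df g s)" for s
    have ms: "\<alpha> * (\<Sum>s<T. E s) \<le> f \<theta>0 - f_inf + norm (df \<theta>0) * c * \<alpha> * (1 + B)
     + L * c\<^sup>2 * \<alpha>\<^sup>2 * B + L * (1 + c) * \<alpha>\<^sup>2 * (real T * (2 * B))"
      using main_sum[OF H T1] unfolding E_def c_def B_def .
    also have "\<dots> \<le> \<alpha> * r * C1"
    proof -
      have 1: "f \<theta>0 - f_inf \<le> \<alpha> * r * ((f \<theta>0 - f_inf) / a1)"
      proof -
        have "a1 * (f \<theta>0 - f_inf) \<le> (\<alpha> * r) * (f \<theta>0 - f_inf)" using alr1 D0 by (rule mult_right_mono)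
        then show ?thesis using a by (simp add: field_simps)
      qed
      have 2: "norm (df \<theta>0) * c * \<alpha> * (1 + B) \<le> \<alpha> * r * (norm (df \<theta>0) * c * (1 + B))"
      proof -
        have "(norm (df \<theta>0) * c * \<alpha> * (1 + B)) * 1 \<le> (norm (df \<theta>0) * c * \<alpha> * (1 + B)) * r"
          using r1 alp c0 B0 by (intro mult_left_mono) auto
        then show ?thesis by (simp add: algebra_simps)
      qed
      have 3: "L * c\<^sup>2 * \<alpha>\<^sup>2 * B \<le> \<alpha> * r * (L * c\<^sup>2 * a2 * B)"
      proof -
        have "\<alpha> \<le> a2" using alr2 r1 alp by (smt (verit) mult_le_cancel_left1)
        then have "L * c\<^sup>2 * B * \<alpha> * \<alpha> \<le> L * c\<^sup>2 * B * (\<alpha> * r) * a2"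
          using alp r1 L0 B0 by (intro mult_mono) (auto simp: mult_left_le_one_le)
        then show ?thesis by (simp add: power2_eq_square algebra_simps)
      qed
      have 4: "L * (1 + c) * \<alpha>\<^sup>2 * (real T * (2 * B)) \<le> \<alpha> * r * (2 * L * (1 + c) * a2 * B)"
      proof -
        have "(2 * L * (1 + c) * B) * (\<alpha> * r) * (\<alpha> * r) \<le> (2 * L * (1 + c) * B) * (\<alpha> * r) * a2"
          using alr2 alp r1 L0 c0 B0 by (intro mult_left_mono) auto
        then show ?thesis unfolding rT[symmetric] by (simp add: power2_eq_square algebra_simps)
      qed
      show ?thesis unfolding C1_def using 1 2 3 4 by (simp add: algebra_simps)
    qed
    finally have ms2: "\<alpha> * (\<Sum>s<T. E s) \<le> \<alpha> * r * C1" .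
    define m where "m = Min (E ` {..<T})"
    have ne: "{..<T} \<noteq> {}" using T1 lessThan_empty_iff[of T] by simp
    have "m \<in> E ` {..<T}" unfolding m_def using ne by (intro Min_in) auto
    then obtain s where sT: "s < T" and Es: "E s = m" by auto
    have Ems: "\<And>s'. s' < T \<Longrightarrow> E s \<le> E s'" unfolding Es m_def by (intro Min_le) auto
    have "real T * E s = (\<Sum>s'<T. E s)" by simp
    also have "\<dots> \<le> (\<Sum>s'<T. E s')" by (intro sum_mono Ems) auto
    finally have "\<alpha> * (real T * E s) \<le> \<alpha> * r * C1" using ms2 alp by (smt (verit) mult_left_mono)
    then have "\<alpha> * r * (r * E s) \<le> \<alpha> * r * C1" unfolding rT[symmetric] by (simp add: power2_eq_square algebra_simps)
    then have EsC: "r * E s \<le> C1" using alp r1 by (simp add: mult_le_cancel_left_pos)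
    define \<rho> where "\<rho> = r powr (1/3)"
    have \<rho>p: "\<rho> > 0" unfolding \<rho>_def using r1 by simp
    have \<rho>3: "\<rho> ^ 3 = r"
    proof -
      have "\<rho> ^ 3 = \<rho> powr (real 3)" using \<rho>p by (simp add: powr_realpow)
      also have "\<dots> = r" unfolding \<rho>_def powr_powr using r1 by simp
      finally show ?thesis .
    qed
    have ps: "(\<integral>\<omega>. (norm (df (thR \<alpha> \<beta>1 \<beta>2 \<epsilon> \<theta>0 g s \<omega>))) powr (4/3) \<partial>M) \<le> E s / (1 / \<rho>) + (1 / \<rho>)\<^sup>2 * P"
      using pow_step[OF H sT, of "1 / \<rho>"] \<rho>p unfolding E_def P_def by simp
    also have "\<dots> \<le> (C1 + P) / \<rho>\<^sup>2"
    proof -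
      have rr: "\<rho> * \<rho>^2 = r" using \<rho>3 by (simp add: power2_eq_square power3_eq_cube)
      have "E s * \<rho> * \<rho>^2 = r * E s" by (metis rr mult.assoc mult.commute)
      then have "E s * \<rho> * \<rho>^2 \<le> C1" using EsC by linarith
      then have "E s * \<rho> \<le> C1 / \<rho>^2" using \<rho>p by (simp add: field_simps)
      moreover have "E s / (1 / \<rho>) = E s * \<rho>" by simp
      moreover have "(1 / \<rho>)\<^sup>2 * P = P / \<rho>\<^sup>2" by (simp add: power_divide)
      moreover have "(C1 + P) / \<rho>\<^sup>2 = C1 / \<rho>\<^sup>2 + P / \<rho>\<^sup>2" by (rule add_divide_distrib)
      ultimately show ?thesis by linarith
    qed
    finally have pw: "(\<integral>\<omega>. (norm (df (thR \<alpha> \<beta>1 \<beta>2 \<epsilon> \<theta>0 g s \<omega>))) powr (4/3) \<partial>M) \<le> (C1 + P) / \<rho>\<^sup>2" .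
    have nn: "0 \<le> (\<integral>\<omega>. (norm (df (thR \<alpha> \<beta>1 \<beta>2 \<epsilon> \<theta>0 g s \<omega>))) powr (4/3) \<partial>M)"
      by (rule integral_nonneg_AE) auto
    have "(\<integral>\<omega>. (norm (df (thR \<alpha> \<beta>1 \<beta>2 \<epsilon> \<theta>0 g s \<omega>))) powr (4/3) \<partial>M) powr (3/2)
        \<le> ((C1 + P) / \<rho>\<^sup>2) powr (3/2)"
      using nn pw by (intro powr_mono2) auto
    also have "\<dots> = K / r"
    proof -
      have "(\<rho>\<^sup>2) powr (3/2) = r"
      proof -
        have "(\<rho>\<^sup>2) powr (3/2) = (\<rho> powr 2) powr (3/2)" using \<rho>p by (simp add: powr_realpow)
        also have "\<dots> = \<rho> powr (real 3)" unfolding powr_powr by simp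
        also have "\<dots> = r" using \<rho>p \<rho>3 by (simp add: powr_realpow)
        finally show ?thesis .
      qed
      then show ?thesis unfolding K_def using C10 P0 \<rho>p by (simp add: powr_divide)
    qed
    finally have fin: "(\<integral>\<omega>. (norm (df (thR \<alpha> \<beta>1 \<beta>2 \<epsilon> \<theta>0 g s \<omega>))) powr (4/3) \<partial>M) powr (3/2) \<le> K / r" .
    have "(MIN t\<in>{1..T}. (\<integral>\<omega>. (norm (df (adopt_theta \<alpha> \<beta>1 \<beta>2 \<epsilon> \<theta>0 (\<lambda>s. g s \<omega>) (t - 1)))) powr (4/3) \<partial>M) powr (3/2))
      \<le> (\<integral>\<omega>. (norm (df (adopt_theta \<alpha> \<beta>1 \<beta>2 \<epsilon> \<theta>0 (\<lambda>s. g s \<omega>) (Suc s - 1)))) powr (4/3) \<partial>M) powr (3/2)"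
    proof (rule Min_le)
      show "finite ((\<lambda>t. (\<integral>\<omega>. (norm (df (adopt_theta \<alpha> \<beta>1 \<beta>2 \<epsilon> \<theta>0 (\<lambda>s. g s \<omega>) (t - 1)))) powr (4/3) \<partial>M) powr (3/2)) ` {1..T})"
        by simp
      show "(\<integral>\<omega>. (norm (df (adopt_theta \<alpha> \<beta>1 \<beta>2 \<epsilon> \<theta>0 (\<lambda>s. g s \<omega>) (Suc s - 1)))) powr (4/3) \<partial>M) powr (3/2)
        \<in> (\<lambda>t. (\<integral>\<omega>. (norm (df (adopt_theta \<alpha> \<beta>1 \<beta>2 \<epsilon> \<theta>0 (\<lambda>s. g s \<omega>) (t - 1)))) powr (4/3) \<partial>M) powr (3/2)) ` {1..T}"
        by (rule imageI) (use sT in auto)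
    qed
    also have "\<dots> = (\<integral>\<omega>. (norm (df (thR \<alpha> \<beta>1 \<beta>2 \<epsilon> \<theta>0 g s \<omega>))) powr (4/3) \<partial>M) powr (3/2)"
      by (simp add: TH_adopt)
    finally show "(MIN t\<in>{1..T}. (\<integral>\<omega>. (norm (df (adopt_theta \<alpha> \<beta>1 \<beta>2 \<epsilon> \<theta>0 (\<lambda>s. g s \<omega>) (t - 1)))) powr (4/3) \<partial>M) powr (3/2))
             \<le> K / sqrt T" using fin unfolding r_def by simp
  qed
qed


end
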